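(* Let $H$ be a graph with $1\le\delta(H)\le|V(H)|-2$ and let $\{\mathcal H_i\}_{i=1}^s$ be a $d$-sequence of $H$ such that $Z=\min\{z_i(H): 2\le i\le s\}\le 0$. Let $T$ be a graph with $1\le\delta(T)\le|V(T)|-2$ having a $d$-sequence $\{\mathcal T_i\}_{i=1}^t$ with $z_i(T)\ge0$ for all $2\le i\le t$. Let $G=H+T$. If $z_t(T)\ge d_H-Z$, then $|V(G)|+\delta(G)\le str(G)\le |V(G)|+d_T$.
   Context: For a graph $G$ of order $p$, a numbering of $G$ is a bijection $f:V(G)\to[1,p]$. The strength of a numbering $f$ is $str_f(G)=\max\{f(u)+f(v): uv\in E(G)\}$, and $str(G)=\min\{str_f(G): f \text{ a numbering of } G\}$. $\delta(G)$ is the minimum degree; $G+H$ denotes disjoint union; $mK_1$ is the edgeless graph on $m$ vertices; $K_r$ the complete graph. $d$-sequence: Let $G$ have order $p$ with $1\le\delta(G)\le p-2$. Set $\mathcal G_1=G_1=G$, $m_1=0$. For each $i$, write $\mathcal G_i=m_iK_1+G_i$, where $m_i\ge0$ is the number of isolated vertices of $\mathcal G_i$ and $G_i$ has no isolated vertices. If $\mathcal G_i$ is neither of the form $mK_1$ ($m\ge1$) nor $mK_1+K_r$ ($m\ge0$, $r\ge2$), choose any vertex $u_i$ of $G_i$, put $d_i=\deg_{G_i}(u_i)$, and let $\mathcal G_{i+1}$ be obtained from $G_i$ by deleting $u_i$ together with all its neighbours in $G_i$. Stop at the first index $s$ ($s\ge 2$) for which $\mathcal G_s$ is $m_sK_1$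 with $m_s\ge1$ (then set $d_s=0$) or $m_sK_1+K_r$ with $m_s\ge0$, $r\ge2$ (then $d_s=r-1$). The sequence $\{\mathcal G_i\}_{i=1}^s$ is a $d$-sequence of $G$. Write $d_G=d_1$, $y_j(G)=m_j+1-d_j$ and $z_i(G)=\sum_{j=2}^i y_j(G)$ for $2\le i\le s$. *)

theory Defs
  imports Main
begin

definition graph :: "'a set \<Rightarrow> ('a \<Rightarrow> 'a \<Rightarrow> bool) \<Rightarrow> bool" where
  "graph V E \<longleftrightarrow> finite V \<and> (\<forall>x y. E x y \<longrightarrow> E y x) \<and> (\<forall>x. \<not> E x x)
     \<and> (\<forall>x y. E x y \<longrightarrow> x \<in> V \<and> y \<in> V)"

definition degree :: "'a set \<Rightarrow> ('a \<Rightarrow> 'a \<Rightarrow> bool) \<Rightarrow> 'a \<Rightarrow> nat" where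
  "degree V E v = card {w \<in> V. E v w}"

definition mindeg :: "'a set \<Rightarrow> ('a \<Rightarrow> 'a \<Rightarrow> bool) \<Rightarrow> nat" where
  "mindeg V E = Min (degree V E ` V)"

definition strength_of :: "'a set \<Rightarrow> ('a \<Rightarrow> 'a \<Rightarrow> bool) \<Rightarrow> ('a \<Rightarrow> nat) \<Rightarrow> nat" where
  "strength_of V E f = Max {f u + f v | u v. E u v}"

definition str :: "'a set \<Rightarrow> ('a \<Rightarrow> 'a \<Rightarrow> bool) \<Rightarrow> nat" where
  "str V E = Min {strength_of V E f | f. bij_betw f V {1..card V}}"

text \<open>Disjoint union H + T on the sum type.\<close>

fun sum_edges :: "('a \<Rightarrow> 'a \<Rightarrow> bool) \<Rightarrow> ('b \<Rightarrow> 'b \<Rightarrow> bool) \<Rightarrow> 'a + 'b \<Rightarrow> 'a + 'b \<Rightarrow> bool" where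
  "sum_edges EH ET (Inl x) (Inl y) = EH x y"
| "sum_edges EH ET (Inr x) (Inr y) = ET x y"
| "sum_edges EH ET _ _ = False"

definition sum_verts :: "'a set \<Rightarrow> 'b set \<Rightarrow> ('a + 'b) set" where
  "sum_verts VH VT = Inl ` VH \<union> Inr ` VT"

text \<open>d-sequences. Each graph \<G>_i is the subgraph of G induced by a vertex set W_i.
iso E W: isolated vertices of the induced graph on W; core E W: vertex set of G_i.\<close>

definition iso :: "('a \<Rightarrow> 'a \<Rightarrow> bool) \<Rightarrow> 'a set \<Rightarrow> 'a set" where
  "iso E W = {v \<in> W. \<forall>w \<in> W. \<not> E v w}"

definition core :: "('a \<Rightarrow> 'a \<Rightarrow> bool) \<Rightarrow> 'a set \<Rightarrow> 'a set" where
  "core E W = W - iso E W"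

definition next_set :: "('a \<Rightarrow> 'a \<Rightarrow> bool) \<Rightarrow> 'a set \<Rightarrow> 'a \<Rightarrow> 'a set" where
  "next_set E W u = core E W - ({u} \<union> {w \<in> core E W. E u w})"

text \<open>dW V E u k is the vertex set of \<G>_{k+1} (u i is the chosen vertex u_i).\<close>
primrec dW :: "'a set \<Rightarrow> ('a \<Rightarrow> 'a \<Rightarrow> bool) \<Rightarrow> (nat \<Rightarrow> 'a) \<Rightarrow> nat \<Rightarrow> 'a set" where
  "dW V E u 0 = V"
| "dW V E u (Suc k) = next_set E (dW V E u k) (u (Suc k))"

definition calG :: "'a set \<Rightarrow> ('a \<Rightarrow> 'a \<Rightarrow> bool) \<Rightarrow> (nat \<Rightarrow> 'a) \<Rightarrow> nat \<Rightarrow> 'a set" where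
  "calG V E u i = dW V E u (i - 1)"

text \<open>Terminal forms: mK_1 with m \<ge> 1, or mK_1 + K_r with r \<ge> 2.\<close>
definition is_empty_form :: "('a \<Rightarrow> 'a \<Rightarrow> bool) \<Rightarrow> 'a set \<Rightarrow> bool" where
  "is_empty_form E W \<longleftrightarrow> W \<noteq> {} \<and> core E W = {}"

definition is_clique_form :: "('a \<Rightarrow> 'a \<Rightarrow> bool) \<Rightarrow> 'a set \<Rightarrow> bool" where
  "is_clique_form E W \<longleftrightarrow> card (core E W) \<ge> 2 \<and>
     (\<forall>x \<in> core E W. \<forall>y \<in> core E W. x \<noteq> y \<longrightarrow> E x y)"

definition terminal :: "('a \<Rightarrow> 'a \<Rightarrow> bool) \<Rightarrow> 'a set \<Rightarrow> bool" where
  "terminal E W \<longleftrightarrow> is_empty_form E W \<or> is_clique_form E W"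

definition is_dseq :: "'a set \<Rightarrow> ('a \<Rightarrow> 'a \<Rightarrow> bool) \<Rightarrow> (nat \<Rightarrow> 'a) \<Rightarrow> nat \<Rightarrow> bool" where
  "is_dseq V E u s \<longleftrightarrow> s \<ge> 2 \<and>
     (\<forall>i. 1 \<le> i \<and> i < s \<longrightarrow> \<not> terminal E (calG V E u i) \<and> u i \<in> core E (calG V E u i)) \<and>
     terminal E (calG V E u s)"

definition dseq_m :: "'a set \<Rightarrow> ('a \<Rightarrow> 'a \<Rightarrow> bool) \<Rightarrow> (nat \<Rightarrow> 'a) \<Rightarrow> nat \<Rightarrow> nat" where
  "dseq_m V E u i = card (iso E (calG V E u i))"

definition dseq_d :: "'a set \<Rightarrow> ('a \<Rightarrow> 'a \<Rightarrow> bool) \<Rightarrow> (nat \<Rightarrow> 'a) \<Rightarrow> nat \<Rightarrow> nat \<Rightarrow> nat" where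
  "dseq_d V E u s i =
     (if i < s then card {w \<in> core E (calG V E u i). E (u i) w}
      else if is_empty_form E (calG V E u i) then 0
      else card (core E (calG V E u i)) - 1)"

definition dseq_y :: "'a set \<Rightarrow> ('a \<Rightarrow> 'a \<Rightarrow> bool) \<Rightarrow> (nat \<Rightarrow> 'a) \<Rightarrow> nat \<Rightarrow> nat \<Rightarrow> int" where
  "dseq_y V E u s j = int (dseq_m V E u j) + 1 - int (dseq_d V E u s j)"

definition dseq_z :: "'a set \<Rightarrow> ('a \<Rightarrow> 'a \<Rightarrow> bool) \<Rightarrow> (nat \<Rightarrow> 'a) \<Rightarrow> nat \<Rightarrow> nat \<Rightarrow> int" where
  "dseq_z V E u s i = (\<Sum>j = 2..i. dseq_y V E u s j)"

end

theory Submission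
  imports Defs
begin

definition lst :: "'v set \<Rightarrow> 'v list" where "lst A = (SOME xs. set xs = A \<and> distinct xs)"

lemma lst: "finite A \<Longrightarrow> set (lst A) = A \<and> distinct (lst A)"
  unfolding lst_def by (rule someI_ex) (simp add: finite_distinct_list)

lemma lst_len: "finite A \<Longrightarrow> length (lst A) = card A"
  using lst distinct_card by metis

definition tg :: "'v set \<Rightarrow> bool \<Rightarrow> ('v \<times> bool) list" where
  "tg A b = map (\<lambda>x. (x,b)) (lst A)"

fun okl :: "('v \<Rightarrow> 'v \<Rightarrow> bool) \<Rightarrow> int \<Rightarrow> int \<Rightarrow> 'v set \<Rightarrow> ('v \<times> bool) list \<Rightarrow> bool" where
  "okl E D p S [] = True"
| "okl E D p S ((x,b)#xs) = (if b then p \<le> D \<and> (\<forall>w. E x w \<longrightarrow> w \<in> S) \<and> okl E D (p - 1) S xs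
       else okl E D (p + 1) (insert x S) xs)"

fun Phi :: "('v \<times> bool) list \<Rightarrow> int" where
  "Phi [] = 0"
| "Phi ((x,b)#xs) = (if b then -1 else 1) + Phi xs"

fun sm :: "('v \<times> bool) list \<Rightarrow> 'v set" where
  "sm [] = {}"
| "sm ((x,b)#xs) = (if b then sm xs else insert x (sm xs))"

lemma Phi_append[simp]: "Phi (xs @ ys) = Phi xs + Phi ys"
  by (induction xs rule: Phi.induct) auto

lemma sm_append[simp]: "sm (xs @ ys) = sm xs \<union> sm ys"
  by (induction xs rule: sm.induct) auto

lemma okl_append: "okl E D p S (xs @ ys) \<longleftrightarrow> okl E D p S xs \<and> okl E D (p + Phi xs) (S \<union> sm xs) ys"
proof (induction xs arbitrary: p S)
  case Nil then show ?case by simp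
next
  case (Cons q xs)
  obtain x b where q: "q = (x,b)" by (cases q)
  show ?case using Cons.IH by (auto simp: q algebra_simps)
qed

lemma okl_nbr: "okl E D p S xs \<Longrightarrow> (x,True) \<in> set xs \<Longrightarrow> E x y \<Longrightarrow> y \<in> S \<union> sm xs"
proof (induction xs arbitrary: p S)
  case Nil then show ?case by simp
next
  case (Cons q xs)
  obtain z b where q: "q = (z,b)" by (cases q)
  show ?case using Cons by (auto simp: q split: if_splits)
qed

lemma okl_map:
  assumes nb: "\<forall>x w. E' (g x) w \<longrightarrow> (\<exists>w0. w = g w0 \<and> E x w0)"
  shows "okl E D p S xs \<Longrightarrow> p' + D \<le> D' + p \<Longrightarrow> g ` S \<subseteq> S' \<Longrightarrow> okl E' D' p' S' (map (\<lambda>(x,b). (g x, b)) xs)"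
proof (induction xs arbitrary: p p' S S')
  case Nil then show ?case by simp
next
  case (Cons q xs)
  obtain z b where q: "q = (z,b)" by (cases q)
  show ?case
  proof (cases b)
    case True
    have "okl E' D' (p' - 1) S' (map (\<lambda>(x,b). (g x, b)) xs)"
      using Cons by (intro Cons.IH[of "p - 1" S]) (auto simp: q True)
    moreover have "\<forall>w. E' (g z) w \<longrightarrow> w \<in> S'"
    proof (intro allI impI)
      fix w assume "E' (g z) w"
      then obtain w0 where "w = g w0" "E z w0" using nb by blast
      then show "w \<in> S'" using Cons.prems by (auto simp: q True)
    qed
    ultimately show ?thesis using Cons.prems by (auto simp: q True)
  next
    case False
    have "okl E' D' (p' + 1) (insert (g z) S') (map (\<lambda>(x,b). (g x, b)) xs)"
      using Cons by (intro Cons.IH[of "p + 1" "insert z S"]) (auto simp: q False)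
    then show ?thesis by (simp add: q False)
  qed
qed

lemma Phi_map[simp]: "Phi (map (\<lambda>(x,b). (g x, b)) xs) = Phi xs"
  by (induction xs rule: Phi.induct) auto

lemma okl_small: "okl E D p S (map (\<lambda>x. (x,False)) ys)"
  by (induction ys arbitrary: p S) auto

lemma okl_big: "p \<le> D \<Longrightarrow> (\<forall>x\<in>set ys. \<forall>w. E x w \<longrightarrow> w \<in> S) \<Longrightarrow> okl E D p S (map (\<lambda>x. (x,True)) ys)"
  by (induction ys arbitrary: p) auto

lemma Phi_tgT[simp]: "Phi (map (\<lambda>x. (x,True)) ys) = - int (length ys)"
  by (induction ys) auto
lemma Phi_tgF[simp]: "Phi (map (\<lambda>x. (x,False)) ys) = int (length ys)"
  by (induction ys) auto
lemma sm_tgT[simp]: "sm (map (\<lambda>x. (x,True)) ys) = {}"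
  by (induction ys) auto
lemma sm_tgF[simp]: "sm (map (\<lambda>x. (x,False)) ys) = set ys"
  by (induction ys) auto

definition nS :: "('v \<times> bool) list \<Rightarrow> nat" where "nS xs = length (filter (\<lambda>p. \<not> snd p) xs)"
definition nB :: "('v \<times> bool) list \<Rightarrow> nat" where "nB xs = length (filter snd xs)"

lemma Phi_eq: "Phi xs = int (nS xs) - int (nB xs)"
  by (induction xs rule: Phi.induct) (auto simp: nS_def nB_def)
lemma len_eq: "length xs = nS xs + nB xs"
  unfolding nS_def nB_def by (induction xs) auto
lemma sm_eq: "sm xs = {x. (x,False) \<in> set xs}"
  by (induction xs rule: sm.induct) auto


lemma lab:
  assumes sym: "\<forall>x y. E x y \<longrightarrow> E y x"
  shows "distinct (map fst xs) \<Longrightarrow> okl E D 0 {} xs \<Longrightarrow> length xs \<le> P \<Longrightarrow>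
    \<exists>f. inj_on f (fst ` set xs) \<and>
      (\<forall>x. (x,True) \<in> set xs \<longrightarrow> P + 1 - nB xs \<le> f x \<and> f x \<le> P) \<and>
      (\<forall>x. (x,False) \<in> set xs \<longrightarrow> 1 \<le> f x \<and> f x \<le> nS xs) \<and>
      (\<forall>x y. (x,True) \<in> set xs \<longrightarrow> E x y \<longrightarrow> (y,False) \<in> set xs \<and> int (f x + f y) \<le> int P + D)"
proof (induction xs rule: rev_induct)
  case Nil then show ?case by auto
next
  case (snoc q xs)
  obtain x b where q: "q = (x,b)" by (cases q)
  from snoc.prems have d: "distinct (map fst xs)" and xn: "x \<notin> fst ` set xs" using q by auto
  from snoc.prems(2) have ok: "okl E D 0 {} xs" and ok2: "okl E D (Phi xs) (sm xs) [(x,b)]"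
    using q by (auto simp: okl_append)
  from snoc.prems(3) have len: "nS xs + nB xs + 1 \<le> P" using len_eq[of xs] by simp
  have lenP: "length xs \<le> P" using snoc.prems(3) by simp
  from snoc.IH[OF d ok lenP] obtain f where
    f1: "inj_on f (fst ` set xs)" and
    f2: "\<forall>x. (x,True) \<in> set xs \<longrightarrow> P + 1 - nB xs \<le> f x \<and> f x \<le> P" and
    f3: "\<forall>x. (x,False) \<in> set xs \<longrightarrow> 1 \<le> f x \<and> f x \<le> nS xs" and
    f4: "\<forall>x y. (x,True) \<in> set xs \<longrightarrow> E x y \<longrightarrow> (y,False) \<in> set xs \<and> int (f x + f y) \<le> int P + D"
    by blast
  have nin: "\<And>c. (x,c) \<notin> set xs" using xn by (metis fst_conv image_eqI)
  have mem: "\<And>y. y \<in> fst ` set xs \<Longrightarrow> (y,True) \<in> set xs \<or> (y,False) \<in> set xs"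
  proof -
    fix y assume "y \<in> fst ` set xs"
    then obtain c where "(y,c) \<in> set xs" by force
    then show "(y,True) \<in> set xs \<or> (y,False) \<in> set xs" by (cases c) auto
  qed
  have okn: "\<And>z y. (z,True) \<in> set xs \<Longrightarrow> E z y \<Longrightarrow> y \<noteq> x"
    using f4 nin by blast
  show ?case
  proof (cases b)
    case True
    from ok2 True have phi: "Phi xs \<le> D" and nbx: "\<forall>w. E x w \<longrightarrow> w \<in> sm xs" by simp_all
    define g where "g = f(x := P - nB xs)"
    have gA: "\<And>y. y \<in> fst ` set xs \<Longrightarrow> g y = f y" proof -
      fix y assume "y \<in> fst ` set xs" then have "y \<noteq> x" using xn by blast
      then show "g y = f y" unfolding g_def by simp
    qed
    have "inj_on g (fst ` set xs)" using f1 gA inj_on_cong by blast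
    moreover have "g x \<notin> g ` (fst ` set xs)"
    proof
      assume "g x \<in> g ` (fst ` set xs)"
      then obtain y where y2: "g x = g y" and y1: "y \<in> fst ` set xs" by (rule imageE)
      note y = y1 y2[symmetric]
      have "g x = P - nB xs" using g_def by simp
      then have fy: "f y = P - nB xs" using gA[OF y(1)] y(2) by simp
      show False
      proof (cases "(y,True) \<in> set xs")
        case True then have "P + 1 - nB xs \<le> f y" using f2 by blast
        then show False using fy len by arith
      next
        case False then have "(y,False) \<in> set xs" using mem[OF y(1)] by blast
        then have "f y \<le> nS xs" using f3 by blast
        then show False using fy len by arith
      qed
    qed
    ultimately have inj: "inj_on g (fst ` set (xs @ [q]))" using q xn by (simp add: inj_on_insert)
    have "\<forall>z. (z,True) \<in> set (xs @ [q]) \<longrightarrow> P + 1 - nB (xs @ [q]) \<le> g z \<and> g z \<le> P"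
      using f2 len nin by (auto simp: q True g_def nB_def)
    moreover have "\<forall>z. (z,False) \<in> set (xs @ [q]) \<longrightarrow> 1 \<le> g z \<and> g z \<le> nS (xs @ [q])"
      using f3 nin by (auto simp: q True g_def nS_def)
    moreover have "\<forall>z y. (z,True) \<in> set (xs @ [q]) \<longrightarrow> E z y \<longrightarrow> (y,False) \<in> set (xs @ [q]) \<and> int (g z + g y) \<le> int P + D"
    proof (intro allI impI)
      fix z y assume z: "(z,True) \<in> set (xs @ [q])" and e: "E z y"
      show "(y,False) \<in> set (xs @ [q]) \<and> int (g z + g y) \<le> int P + D"
      proof (cases "z = x")
        case True
        then have "y \<in> sm xs" using nbx e by simp
        then have ys: "(y,False) \<in> set xs" unfolding sm_eq by simp
        then have "y \<noteq> x" using nin by auto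
        then have "g y = f y" "g z = P - nB xs" using True g_def by auto
        moreover have "f y \<le> nS xs" using f3 ys by auto
        moreover have "int (P - nB xs) = int P - int (nB xs)" using len by simp
        ultimately show ?thesis using ys phi Phi_eq[of xs] by simp
      next
        case False
        then have zs: "(z,True) \<in> set xs" using z q by auto
        then have "(y,False) \<in> set xs" "int (f z + f y) \<le> int P + D" using f4 e by auto
        moreover have "y \<noteq> x" using okn zs e by auto
        ultimately show ?thesis using False g_def by auto
      qed
    qed
    ultimately show ?thesis using inj by blast
  next
    case False
    define g where "g = f(x := nS xs + 1)"
    have gA: "\<And>y. y \<in> fst ` set xs \<Longrightarrow> g y = f y" proof -
      fix y assume "y \<in> fst ` set xs" then have "y \<noteq> x" using xn by blast
      then show "g y = f y" unfolding g_def by simp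
    qed
    have "inj_on g (fst ` set xs)" using f1 gA inj_on_cong by blast
    moreover have "g x \<notin> g ` (fst ` set xs)"
    proof
      assume "g x \<in> g ` (fst ` set xs)"
      then obtain y where y2: "g x = g y" and y1: "y \<in> fst ` set xs" by (rule imageE)
      note y = y1 y2[symmetric]
      have "g x = nS xs + 1" using g_def by simp
      then have fy: "f y = nS xs + 1" using gA[OF y(1)] y(2) by simp
      show False
      proof (cases "(y,True) \<in> set xs")
        case True then have "P + 1 - nB xs \<le> f y" using f2 by blast
        then show False using fy len by arith
      next
        case False then have "(y,False) \<in> set xs" using mem[OF y(1)] by blast
        then have "f y \<le> nS xs" using f3 by blast
        then show False using fy len by arith
      qed
    qed
    ultimately have inj: "inj_on g (fst ` set (xs @ [q]))" using q xn by (simp add: inj_on_insert)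
    have "\<forall>z. (z,True) \<in> set (xs @ [q]) \<longrightarrow> P + 1 - nB (xs @ [q]) \<le> g z \<and> g z \<le> P"
      using f2 len nin by (auto simp: q False g_def nB_def)
    moreover have "\<forall>z. (z,False) \<in> set (xs @ [q]) \<longrightarrow> 1 \<le> g z \<and> g z \<le> nS (xs @ [q])"
      using f3 nin by (auto simp: q False g_def nS_def)
    moreover have "\<forall>z y. (z,True) \<in> set (xs @ [q]) \<longrightarrow> E z y \<longrightarrow> (y,False) \<in> set (xs @ [q]) \<and> int (g z + g y) \<le> int P + D"
    proof (intro allI impI)
      fix z y assume z: "(z,True) \<in> set (xs @ [q])" and e: "E z y"
      then have zs: "(z,True) \<in> set xs" using q False by auto
      then have "(y,False) \<in> set xs" "int (f z + f y) \<le> int P + D" using f4 e by auto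
      moreover have "y \<noteq> x" "z \<noteq> x" using okn zs e nin by auto
      ultimately show "(y,False) \<in> set (xs @ [q]) \<and> int (g z + g y) \<le> int P + D" using g_def by auto
    qed
    ultimately show ?thesis using inj by blast
  qed
qed


lemma edges_fin:
  assumes "graph V E"
  shows "finite {f u + f v | u v. E u v}"
proof -
  have "{f u + f v | u v. E u v} = (\<lambda>(u,v). f u + f v) ` {(u,v). E u v}" by auto
  moreover have "{(u,v). E u v} \<subseteq> V \<times> V" using assms unfolding graph_def by auto
  then have "finite {(u,v). E u v}" using assms unfolding graph_def by (meson finite_SigmaI finite_subset)
  ultimately show ?thesis by simp
qed

lemma str_set_fin:
  assumes g: "graph V E" and ex: "E a b"
  shows "finite {strength_of V E f | f. bij_betw f V {1..card V}}"
proof -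
  have "{strength_of V E f | f. bij_betw f V {1..card V}} \<subseteq> {..2 * card V}"
  proof
    fix n assume "n \<in> {strength_of V E f | f. bij_betw f V {1..card V}}"
    then obtain f where n: "n = strength_of V E f" and bf: "bij_betw f V {1..card V}" by blast
    have "Max {f u + f v | u v. E u v} \<le> 2 * card V"
    proof (rule Max.boundedI)
      show "finite {f u + f v | u v. E u v}" using edges_fin[OF g] .
      show "{f u + f v | u v. E u v} \<noteq> {}" using ex by blast
      fix m assume "m \<in> {f u + f v | u v. E u v}"
      then obtain u v where m: "m = f u + f v" and e: "E u v" by blast
      have "u \<in> V" "v \<in> V" using e g unfolding graph_def by auto
      then have "f u \<le> card V" "f v \<le> card V" using bf unfolding bij_betw_def by auto
      then show "m \<le> 2 * card V" using m by simp
    qed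
    then show "n \<in> {..2 * card V}" using n unfolding strength_of_def by simp
  qed
  then show ?thesis by (rule finite_subset) simp
qed

lemma str_upper:
  assumes g: "graph V E" and d: "distinct (map fst xs)" and sv: "fst ` set xs = V"
    and ok: "okl E (int D) 0 {} xs" and ph: "Phi xs \<le> int D + 1" and ex: "E a b"
  shows "str V E \<le> card V + D"
proof -
  have sym: "\<forall>x y. E x y \<longrightarrow> E y x" and irr: "\<forall>x. \<not> E x x" and inV: "\<forall>x y. E x y \<longrightarrow> x \<in> V \<and> y \<in> V"
    using g unfolding graph_def by auto
  have cV: "card V = length xs" using d sv distinct_card[OF d] by simp
  obtain f where
    f1: "inj_on f (fst ` set xs)" and
    f2: "\<forall>x. (x,True) \<in> set xs \<longrightarrow> length xs + 1 - nB xs \<le> f x \<and> f x \<le> length xs" and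
    f3: "\<forall>x. (x,False) \<in> set xs \<longrightarrow> 1 \<le> f x \<and> f x \<le> nS xs" and
    f4: "\<forall>x y. (x,True) \<in> set xs \<longrightarrow> E x y \<longrightarrow> (y,False) \<in> set xs \<and> int (f x + f y) \<le> int (length xs) + int D"
    using lab[OF sym d ok, of "length xs"] by blast
  have lq: "length xs = nS xs + nB xs" by (rule len_eq)
  have mem: "\<And>y. y \<in> V \<Longrightarrow> (y,True) \<in> set xs \<or> (y,False) \<in> set xs"
  proof -
    fix y assume "y \<in> V"
    then obtain c where "(y,c) \<in> set xs" using sv by force
    then show "(y,True) \<in> set xs \<or> (y,False) \<in> set xs" by (cases c) auto
  qed
  have inj: "inj_on f V" using f1 sv by simp
  have rng: "f ` V \<subseteq> {1..card V}"
  proof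
    fix n assume "n \<in> f ` V"
    then obtain y where "n = f y" "y \<in> V" by blast
    then show "n \<in> {1..card V}" using mem[of y] f2 f3 lq cV by force
  qed
  have "card (f ` V) = card {1..card V}" using card_image[OF inj] by simp
  then have "f ` V = {1..card V}" using rng by (intro card_subset_eq) auto
  then have bf: "bij_betw f V {1..card V}" using inj unfolding bij_betw_def by blast
  have "strength_of V E f \<le> card V + D"
    unfolding strength_of_def
  proof (rule Max.boundedI)
    show "finite {f u + f v | u v. E u v}" using edges_fin[OF g] .
    show "{f u + f v | u v. E u v} \<noteq> {}" using ex by blast
    fix m assume "m \<in> {f u + f v | u v. E u v}"
    then obtain u v where m: "m = f u + f v" and e: "E u v" by blast
    have uv: "u \<in> V" "v \<in> V" using e inV by auto
    show "m \<le> card V + D"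
    proof (cases "(u,True) \<in> set xs")
      case True then show ?thesis using f4 e m cV by force
    next
      case F1: False
      show ?thesis
      proof (cases "(v,True) \<in> set xs")
        case True then have "int (f v + f u) \<le> int (length xs) + int D" using f4 sym e by blast
        then show ?thesis using m cV by simp
      next
        case False
        then have "(u,False) \<in> set xs" "(v,False) \<in> set xs" using mem uv F1 by auto
        then have a: "f u \<le> nS xs" "f v \<le> nS xs" using f3 by auto
        have "u \<noteq> v" using e irr by auto
        then have "f u \<noteq> f v" using inj uv unfolding inj_on_def by blast
        then have "f u + f v + 1 \<le> 2 * nS xs" using a by linarith
        moreover have "int (nS xs) - int (nB xs) \<le> int D + 1" using ph Phi_eq[of xs] by simp
        ultimately show ?thesis using m cV lq by linarith
      qed
    qed
  qed
  moreover have "str V E \<le> strength_of V E f"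
    unfolding str_def using bf str_set_fin[OF g ex] by (intro Min_le) auto
  ultimately show ?thesis by simp
qed

lemma str_lower:
  assumes g: "graph V E" and deg: "\<forall>v\<in>V. 1 \<le> degree V E v" and ne: "V \<noteq> {}"
  shows "card V + mindeg V E \<le> str V E"
proof -
  have fV: "finite V" using g unfolding graph_def by simp
  obtain v0 where v0: "v0 \<in> V" using ne by blast
  have "degree V E v0 \<ge> 1" using deg v0 by blast
  then have "{w \<in> V. E v0 w} \<noteq> {}" unfolding degree_def by (metis card.empty not_one_le_zero)
  then obtain w0 where ex: "E v0 w0" by blast
  obtain h where h: "bij_betw h V {0..<card V}" using ex_bij_betw_finite_nat[OF fV] by blast
  have "bij_betw (Suc \<circ> h) V {1..card V}"
  proof -
    have "bij_betw Suc {0..<card V} {1..card V}"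
      by (simp add: bij_betw_def image_Suc_atLeastLessThan atLeastLessThanSuc_atLeastAtMost)
    then show ?thesis using bij_betw_trans h by blast
  qed
  then have nea: "{strength_of V E f | f. bij_betw f V {1..card V}} \<noteq> {}" by blast
  have "str V E \<in> {strength_of V E f | f. bij_betw f V {1..card V}}"
    unfolding str_def using str_set_fin[OF g ex] nea by (rule Min_in)
  then obtain f where sf: "str V E = strength_of V E f" and bf: "bij_betw f V {1..card V}" by blast
  have "card V \<in> f ` V" using bf ne fV unfolding bij_betw_def by (simp add: Suc_leI card_gt_0_iff)
  then obtain v where v: "v \<in> V" "f v = card V" by force
  define Nb where "Nb = {w \<in> V. E v w}"
  have fN: "finite Nb" using fV Nb_def by simp
  have cN: "card Nb = degree V E v" unfolding Nb_def degree_def by simp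
  have "mindeg V E \<le> degree V E v" unfolding mindeg_def using fV v by simp
  moreover have "1 \<le> card Nb" using cN deg v by simp
  ultimately have c1: "mindeg V E \<le> card Nb" "Nb \<noteq> {}" using cN by auto
  have injN: "inj_on f Nb" using bf Nb_def unfolding bij_betw_def by (metis (no_types, lifting) inj_on_subset mem_Collect_eq subsetI)
  define B where "B = f ` Nb"
  have fB: "finite B" "B \<noteq> {}" using fN c1 B_def by auto
  have cB: "card B = card Nb" using injN B_def card_image by blast
  have "B \<subseteq> {1..Max B}"
  proof
    fix n assume n: "n \<in> B"
    then have "n \<ge> 1" using bf B_def Nb_def unfolding bij_betw_def by auto
    moreover have "n \<le> Max B" using n fB by simp
    ultimately show "n \<in> {1..Max B}" by simp
  qed
  then have "card B \<le> Max B" using card_mono[of "{1..Max B}" B] by simp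
  moreover obtain w where w: "w \<in> Nb" "f w = Max B" using Max_in[OF fB] B_def by auto
  ultimately have "mindeg V E \<le> f w" using cB c1 by simp
  moreover have "E v w" using w Nb_def by simp
  then have "f v + f w \<le> strength_of V E f" unfolding strength_of_def
    using edges_fin[OF g] by (intro Max_ge) auto
  ultimately show ?thesis using sf v by simp
qed


definition nbs :: "('a \<Rightarrow> 'a \<Rightarrow> bool) \<Rightarrow> 'a set \<Rightarrow> 'a \<Rightarrow> 'a set" where
  "nbs E W x = {w \<in> core E W. E x w}"

definition U :: "'a set \<Rightarrow> ('a \<Rightarrow> 'a \<Rightarrow> bool) \<Rightarrow> (nat \<Rightarrow> 'a) \<Rightarrow> nat \<Rightarrow> 'a set" where
  "U V E u k = (\<Union>j\<in>{1..k}. nbs E (dW V E u (j - 1)) (u j))"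

lemma dW_sub: "dW V E u k \<subseteq> V"
  by (induction k) (auto simp: next_set_def core_def)

lemma dW_Suc_sub: "dW V E u (Suc k) \<subseteq> dW V E u k"
  by (auto simp: next_set_def core_def)

lemma nbr:
  assumes g: "graph V E"
  shows "x \<in> dW V E u k \<Longrightarrow> E x w \<Longrightarrow> w \<notin> dW V E u k \<Longrightarrow> w \<in> U V E u k"
proof (induction k)
  case 0
  then show ?case using g unfolding graph_def by auto
next
  case (Suc k)
  let ?W = "dW V E u k"
  let ?u = "u (Suc k)"
  have x: "x \<in> core E ?W" "x \<noteq> ?u" "\<not> E ?u x" using Suc.prems(1) by (auto simp: next_set_def)
  have xW: "x \<in> ?W" using x(1) by (simp add: core_def)
  have sym: "E w x" using g Suc.prems(2) unfolding graph_def by blast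
  show ?case
  proof (cases "w \<in> ?W")
    case False
    then have "w \<in> U V E u k" using Suc.IH xW Suc.prems(2) by blast
    then show ?thesis unfolding U_def by auto
  next
    case True
    have "w \<notin> iso E ?W" using sym xW unfolding iso_def by blast
    then have wc: "w \<in> core E ?W" using True unfolding core_def by blast
    have "w \<noteq> ?u" using x(3) sym by blast
    then have "w \<in> nbs E ?W ?u" using wc Suc.prems(3) by (auto simp: next_set_def nbs_def)
    then show ?thesis unfolding U_def by force
  qed
qed

primrec Lp :: "'a set \<Rightarrow> ('a \<Rightarrow> 'a \<Rightarrow> bool) \<Rightarrow> (nat \<Rightarrow> 'a) \<Rightarrow> nat \<Rightarrow> ('a \<times> bool) list" where
  "Lp V E u 0 = []"
| "Lp V E u (Suc k) = Lp V E u k @ (tg (iso E (dW V E u k)) True @ tg (nbs E (dW V E u k) (u (Suc k))) False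
      @ [(u (Suc k), True)])"

lemma z1: "dseq_z V E u s 1 = 0" by (simp add: dseq_z_def)
lemma zSuc: "1 \<le> k \<Longrightarrow> dseq_z V E u s (Suc k) = dseq_z V E u s k + dseq_y V E u s (Suc k)"
  unfolding dseq_z_def by simp

lemma map_fst_tg[simp]: "map fst (tg A b) = lst A" unfolding tg_def by (simp add: comp_def)

lemma inv:
  assumes g: "graph V E" and ds: "is_dseq V E u s" and D0: "0 \<le> D"
    and hD: "\<forall>i\<in>{1..s}. int (dseq_d V E u s 1) - dseq_z V E u s i \<le> D"
  shows "k < s \<Longrightarrow> distinct (map fst (Lp V E u k)) \<and> fst ` set (Lp V E u k) = V - dW V E u k
      \<and> okl E D 0 {} (Lp V E u k) \<and> U V E u k \<subseteq> sm (Lp V E u k)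
      \<and> Phi (Lp V E u k) = (if k = 0 then 0 else int (dseq_d V E u s 1) - int (dseq_m V E u 1) - 1 - dseq_z V E u s k)"
proof (induction k)
  case 0 then show ?case by (simp add: U_def)
next
  case (Suc k)
  let ?W = "dW V E u k"
  let ?u = "u (Suc k)"
  let ?I = "iso E ?W"
  let ?N = "nbs E ?W ?u"
  let ?L = "Lp V E u k"
  have fV: "finite V" using g unfolding graph_def by simp
  have WV: "?W \<subseteq> V" by (rule dW_sub)
  have fW: "finite ?W" using fV WV finite_subset by blast
  have fI: "finite ?I" using fW unfolding iso_def by simp
  have fN: "finite ?N" using fW unfolding nbs_def core_def by simp
  have IH: "distinct (map fst ?L)" "fst ` set ?L = V - ?W" "okl E D 0 {} ?L" "U V E u k \<subseteq> sm ?L"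
     "Phi ?L = (if k = 0 then 0 else int (dseq_d V E u s 1) - int (dseq_m V E u 1) - 1 - dseq_z V E u s k)"
    using Suc.IH Suc.prems by auto
  have uc: "?u \<in> core E ?W" using ds Suc.prems unfolding is_dseq_def calG_def by auto
  have mk: "dseq_m V E u (Suc k) = card ?I" unfolding dseq_m_def calG_def by simp
  have dk: "dseq_d V E u s (Suc k) = card ?N" unfolding dseq_d_def calG_def nbs_def using Suc.prems by simp
  have phiD: "Phi ?L \<le> D"
  proof (cases "k = 0")
    case True then show ?thesis using IH(5) D0 by simp
  next
    case False
    then have "int (dseq_d V E u s 1) - dseq_z V E u s k \<le> D" using hD Suc.prems by auto
    then show ?thesis using IH(5) False by simp
  qed
  have ucond: "Phi ?L - int (card ?I) + int (card ?N) \<le> D"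
  proof (cases "k = 0")
    case True
    have "int (dseq_d V E u s 1) - dseq_z V E u s 1 \<le> D" using hD Suc.prems by auto
    then show ?thesis using IH(5) True dk z1[of V E u s] by simp
  next
    case False
    then have "int (dseq_d V E u s 1) - dseq_z V E u s (Suc k) \<le> D" using hD Suc.prems by auto
    moreover have "dseq_z V E u s (Suc k) = dseq_z V E u s k + (int (card ?I) + 1 - int (card ?N))"
      using zSuc[of k V E u s] False mk dk unfolding dseq_y_def by simp
    ultimately show ?thesis using IH(5) False by simp
  qed
  have isonb: "\<forall>x\<in>set (lst ?I). \<forall>w. E x w \<longrightarrow> w \<in> sm ?L"
  proof (intro ballI allI impI)
    fix x w assume x: "x \<in> set (lst ?I)" and e: "E x w"
    then have xI: "x \<in> ?I" using lst[OF fI] by simp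
    then have "w \<notin> ?W" using e unfolding iso_def by blast
    moreover have "x \<in> ?W" using xI unfolding iso_def by simp
    ultimately show "w \<in> sm ?L" using nbr[OF g] e IH(4) by blast
  qed
  have unb: "\<forall>w. E ?u w \<longrightarrow> w \<in> sm ?L \<union> ?N"
  proof (intro allI impI)
    fix w assume e: "E ?u w"
    have uW: "?u \<in> ?W" using uc unfolding core_def by simp
    show "w \<in> sm ?L \<union> ?N"
    proof (cases "w \<in> ?W")
      case True
      have "E w ?u" using e g unfolding graph_def by blast
      then have "w \<notin> ?I" using uW unfolding iso_def by blast
      then have "w \<in> ?N" using True e unfolding nbs_def core_def by simp
      then show ?thesis by simp
    next
      case False
      then show ?thesis using nbr[OF g uW e] IH(4) by blast
    qed
  qed
  have okb: "okl E D (Phi ?L) (sm ?L) (tg ?I True @ tg ?N False @ [(?u, True)])"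
    unfolding okl_append
  proof (intro conjI)
    show "okl E D (Phi ?L) (sm ?L) (tg ?I True)" unfolding tg_def using phiD isonb by (rule okl_big)
    show "okl E D (Phi ?L + Phi (tg ?I True)) (sm ?L \<union> sm (tg ?I True)) (tg ?N False)"
      unfolding tg_def by (rule okl_small)
    show "okl E D (Phi ?L + Phi (tg ?I True) + Phi (tg ?N False))
        (sm ?L \<union> sm (tg ?I True) \<union> sm (tg ?N False)) [(?u, True)]"
      using ucond unb lst[OF fN] unfolding tg_def by (simp add: lst_len[OF fI] lst_len[OF fN])
  qed
  have ok: "okl E D 0 {} (Lp V E u (Suc k))" using IH(3) okb by (simp add: okl_append)
  have INW: "?I \<subseteq> ?W" "?N \<subseteq> ?W" "?u \<in> ?W" "?I \<inter> ?N = {}" "?u \<notin> ?I" "?u \<notin> ?N"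
    using uc g unfolding iso_def nbs_def core_def graph_def by auto
  have dist: "distinct (map fst (Lp V E u (Suc k)))"
    using IH(1,2) INW lst[OF fI] lst[OF fN] by auto
  have st: "fst ` set (Lp V E u (Suc k)) = V - dW V E u (Suc k)"
  proof -
    have "fst ` set (Lp V E u (Suc k)) = (V - ?W) \<union> ?I \<union> ?N \<union> {?u}"
      using IH(2) lst[OF fI] lst[OF fN] by (simp add: image_Un Un_assoc flip: set_map)
    also have "... = V - dW V E u (Suc k)"
      using WV uc unfolding dW.simps next_set_def core_def nbs_def iso_def by auto
    finally show ?thesis .
  qed
  have smU: "U V E u (Suc k) \<subseteq> sm (Lp V E u (Suc k))"
    using IH(4) lst[OF fN] unfolding U_def by (auto simp: atLeastAtMostSuc_conv tg_def)
  have ph: "Phi (Lp V E u (Suc k)) = Phi ?L - int (card ?I) + int (card ?N) - 1"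
    by (simp add: tg_def lst_len[OF fI] lst_len[OF fN])
  have ph2: "Phi (Lp V E u (Suc k)) = int (dseq_d V E u s 1) - int (dseq_m V E u 1) - 1 - dseq_z V E u s (Suc k)"
  proof (cases "k = 0")
    case True then show ?thesis using ph IH(5) mk dk z1[of V E u s] by simp
  next
    case False
    have "dseq_z V E u s (Suc k) = dseq_z V E u s k + (int (card ?I) + 1 - int (card ?N))"
      using zSuc[of k V E u s] False mk dk unfolding dseq_y_def by simp
    then show ?thesis using ph IH(5) False by simp
  qed
  show ?case using dist st ok smU ph2 by simp
qed


lemma dseq_list:
  assumes g: "graph V E" and ds: "is_dseq V E u s" and D0: "0 \<le> D"
    and hD: "\<forall>i\<in>{1..s}. int (dseq_d V E u s 1) - dseq_z V E u s i \<le> D"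
  shows "\<exists>xs. distinct (map fst xs) \<and> fst ` set xs = V \<and> okl E D 0 {} xs
     \<and> Phi xs \<le> int (dseq_d V E u s 1) - dseq_z V E u s s"
proof -
  have s2: "s \<ge> 2" using ds unfolding is_dseq_def by simp
  define k where "k = s - 1"
  have sk: "s = Suc k" "k \<ge> 1" "k < s" using s2 k_def by auto
  let ?W = "dW V E u k"
  let ?I = "iso E ?W"
  let ?C = "core E ?W"
  let ?L = "Lp V E u k"
  define c where "c = (SOME c. c \<in> ?C)"
  have fV: "finite V" using g unfolding graph_def by simp
  have WV: "?W \<subseteq> V" by (rule dW_sub)
  have fW: "finite ?W" using fV WV finite_subset by blast
  have fI: "finite ?I" using fW unfolding iso_def by simp
  have fC: "finite ?C" using fW unfolding core_def by simp
  have IH: "distinct (map fst ?L)" "fst ` set ?L = V - ?W" "okl E D 0 {} ?L" "U V E u k \<subseteq> sm ?L"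
     "Phi ?L = int (dseq_d V E u s 1) - int (dseq_m V E u 1) - 1 - dseq_z V E u s k"
    using inv[OF g ds D0 hD sk(3)] sk by auto
  have ms: "dseq_m V E u s = card ?I" unfolding dseq_m_def calG_def using sk by simp
  have dsd: "dseq_d V E u s s = card ?C - 1"
    unfolding dseq_d_def calG_def is_empty_form_def using sk by auto
  have zs: "dseq_z V E u s s = dseq_z V E u s k + (int (card ?I) + 1 - int (card ?C - 1))"
    using zSuc[of k V E u s] sk ms dsd unfolding dseq_y_def by simp
  have phiD: "Phi ?L \<le> D"
  proof -
    have "int (dseq_d V E u s 1) - dseq_z V E u s k \<le> D" using hD sk by auto
    then show ?thesis using IH(5) by simp
  qed
  have isonb: "\<forall>x\<in>set (lst ?I). \<forall>w. E x w \<longrightarrow> w \<in> sm ?L"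
  proof (intro ballI allI impI)
    fix x w assume x: "x \<in> set (lst ?I)" and e: "E x w"
    then have xI: "x \<in> ?I" using lst[OF fI] by simp
    then have "w \<notin> ?W" using e unfolding iso_def by blast
    moreover have "x \<in> ?W" using xI unfolding iso_def by simp
    ultimately show "w \<in> sm ?L" using nbr[OF g] e IH(4) by blast
  qed
  have okI: "okl E D (Phi ?L) (sm ?L) (tg ?I True)" unfolding tg_def using phiD isonb by (rule okl_big)
  have PhiI: "Phi (tg ?I True) = - int (card ?I)" by (simp add: tg_def lst_len[OF fI])
  show ?thesis
  proof (cases "?C = {}")
    case True
    define xs where "xs = ?L @ tg ?I True"
    have "okl E D 0 {} xs" using IH(3) okI unfolding xs_def by (simp add: okl_append)
    moreover have "distinct (map fst xs)" using IH(1,2) lst[OF fI] unfolding xs_def iso_def by auto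
    moreover have "fst ` set xs = V"
    proof -
      have "fst ` set xs = (V - ?W) \<union> ?I" using IH(2) lst[OF fI] unfolding xs_def
        by (simp add: image_Un flip: set_map)
      moreover have "?I = ?W" using True unfolding core_def iso_def by auto
      ultimately show ?thesis using WV by auto
    qed
    moreover have "Phi xs \<le> int (dseq_d V E u s 1) - dseq_z V E u s s"
      using IH(5) PhiI zs True unfolding xs_def by simp
    ultimately show ?thesis by blast
  next
    case False
    then have cC: "c \<in> ?C" unfolding c_def by (metis ex_in_conv someI)
    let ?R = "?C - {c}"
    have fR: "finite ?R" using fC by simp
    have cR: "card ?R = card ?C - 1" using cC fC by simp
    have cpos: "card ?C \<ge> 1" using cC fC by (metis One_nat_def Suc_leI card_gt_0_iff empty_iff)
    define xs where "xs = ?L @ (tg ?I True @ (tg ?R False @ [(c,True)]))"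
    have cnb: "\<forall>w. E c w \<longrightarrow> w \<in> sm ?L \<union> ?R"
    proof (intro allI impI)
      fix w assume e: "E c w"
      have cW: "c \<in> ?W" using cC unfolding core_def by simp
      show "w \<in> sm ?L \<union> ?R"
      proof (cases "w \<in> ?W")
        case True
        have "E w c" using e g unfolding graph_def by blast
        then have "w \<notin> ?I" using cW unfolding iso_def by blast
        moreover have "w \<noteq> c" using e g unfolding graph_def by blast
        ultimately show ?thesis using True unfolding core_def by simp
      next
        case False
        then show ?thesis using nbr[OF g cW e] IH(4) by blast
      qed
    qed
    have ccond: "Phi ?L - int (card ?I) + int (card ?R) \<le> D"
    proof -
      have "int (dseq_d V E u s 1) - dseq_z V E u s s \<le> D" using hD sk by auto
      then show ?thesis using IH(5) zs cR cpos by simp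
    qed
    have okb: "okl E D (Phi ?L) (sm ?L) (tg ?I True @ (tg ?R False @ [(c,True)]))"
      unfolding okl_append
    proof (intro conjI)
      show "okl E D (Phi ?L) (sm ?L) (tg ?I True)" by (rule okI)
      show "okl E D (Phi ?L + Phi (tg ?I True)) (sm ?L \<union> sm (tg ?I True)) (tg ?R False)"
        unfolding tg_def by (rule okl_small)
      show "okl E D (Phi ?L + Phi (tg ?I True) + Phi (tg ?R False))
          (sm ?L \<union> sm (tg ?I True) \<union> sm (tg ?R False)) [(c, True)]"
        using ccond cnb lst[OF fR] by (simp add: tg_def lst_len[OF fI] lst_len[OF fR])
    qed
    have "okl E D 0 {} xs" using IH(3) okb unfolding xs_def by (simp add: okl_append)
    moreover have "distinct (map fst xs)" using IH(1,2) lst[OF fI] lst[OF fR] cC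
      unfolding xs_def iso_def core_def by auto
    moreover have "fst ` set xs = V"
    proof -
      have "fst ` set xs = (V - ?W) \<union> ?I \<union> ?R \<union> {c}" using IH(2) lst[OF fI] lst[OF fR] unfolding xs_def
        by (simp add: image_Un Un_assoc flip: set_map)
      then show ?thesis using WV cC unfolding core_def iso_def by auto
    qed
    moreover have "Phi xs \<le> int (dseq_d V E u s 1) - dseq_z V E u s s"
      using IH(5) PhiI zs cR cpos unfolding xs_def by (simp add: tg_def lst_len[OF fR])
    ultimately show ?thesis by blast
  qed
qed


lemma sum_graph: "graph VH EH \<Longrightarrow> graph VT ET \<Longrightarrow> graph (sum_verts VH VT) (sum_edges EH ET)"
  unfolding graph_def sum_verts_def
  apply (intro conjI allI impI)
     apply simp
  subgoal for x y by (cases x; cases y) auto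
  subgoal for x by (cases x) auto
  subgoal for x y by (cases x; cases y) auto
  subgoal for x y by (cases x; cases y) auto
  done

lemma deg_pos:
  assumes "graph V E" "1 \<le> mindeg V E" "x \<in> V"
  shows "1 \<le> degree V E x"
proof -
  have "finite V" using assms unfolding graph_def by simp
  then have "mindeg V E \<le> degree V E x" unfolding mindeg_def using assms(3) by simp
  then show ?thesis using assms(2) by simp
qed

lemma ne_of_mindeg: "1 \<le> mindeg V E \<Longrightarrow> mindeg V E \<le> card V - 2 \<Longrightarrow> V \<noteq> {}"
  by auto

lemma edge_of_deg: "1 \<le> degree V E x \<Longrightarrow> \<exists>y. E x y"
  unfolding degree_def by (metis (no_types, lifting) Collect_empty_eq card.empty not_one_le_zero)

lemma deg_Inl: "degree (sum_verts VH VT) (sum_edges EH ET) (Inl x) = degree VH EH x"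
proof -
  have "{w \<in> sum_verts VH VT. sum_edges EH ET (Inl x) w} = Inl ` {w \<in> VH. EH x w}"
    unfolding sum_verts_def by (auto elim: sum_edges.elims)
  then show ?thesis unfolding degree_def by (simp add: card_image)
qed

lemma deg_Inr: "degree (sum_verts VH VT) (sum_edges EH ET) (Inr x) = degree VT ET x"
proof -
  have "{w \<in> sum_verts VH VT. sum_edges EH ET (Inr x) w} = Inr ` {w \<in> VT. ET x w}"
    unfolding sum_verts_def by (auto elim: sum_edges.elims)
  then show ?thesis unfolding degree_def by (simp add: card_image)
qed

theorem mainTheorem7:
  fixes VH :: "'a set" and EH :: "'a \<Rightarrow> 'a \<Rightarrow> bool" and uH :: "nat \<Rightarrow> 'a" and s :: nat
    and VT :: "'b set" and ET :: "'b \<Rightarrow> 'b \<Rightarrow> bool" and uT :: "nat \<Rightarrow> 'b" and t :: nat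
    and Z :: int
  assumes "graph VH EH"
    and "1 \<le> mindeg VH EH" and "mindeg VH EH \<le> card VH - 2"
    and "is_dseq VH EH uH s"
    and "Z = Min ((\<lambda>i. dseq_z VH EH uH s i) ` {2..s})"
    and "Z \<le> 0"
    and "graph VT ET"
    and "1 \<le> mindeg VT ET" and "mindeg VT ET \<le> card VT - 2"
    and "is_dseq VT ET uT t"
    and "\<forall>i \<in> {2..t}. dseq_z VT ET uT t i \<ge> 0"
    and "dseq_z VT ET uT t t \<ge> int (dseq_d VH EH uH s 1) - Z"
  shows "card (sum_verts VH VT) + mindeg (sum_verts VH VT) (sum_edges EH ET)
           \<le> str (sum_verts VH VT) (sum_edges EH ET)
       \<and> str (sum_verts VH VT) (sum_edges EH ET)
           \<le> card (sum_verts VH VT) + dseq_d VT ET uT t 1"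
proof -
  note a = assms
  let ?V = "sum_verts VH VT" and ?E = "sum_edges EH ET"
  let ?dH = "dseq_d VH EH uH s 1" and ?dT = "dseq_d VT ET uT t 1"
  have gG: "graph ?V ?E" using sum_graph a(1,7) .
  have neH: "VH \<noteq> {}" using a(2,3) by auto
  then obtain x0 where x0: "x0 \<in> VH" by blast
  have degG: "\<forall>v\<in>?V. 1 \<le> degree ?V ?E v"
  proof
    fix v assume "v \<in> ?V"
    then consider x where "v = Inl x" "x \<in> VH" | x where "v = Inr x" "x \<in> VT"
      unfolding sum_verts_def by blast
    then show "1 \<le> degree ?V ?E v"
    proof cases
      case 1 then show ?thesis using deg_pos[OF a(1,2)] deg_Inl[of VH VT EH ET x] by simp
    next
      case 2 then show ?thesis using deg_pos[OF a(7,8)] deg_Inr[of VH VT EH ET x] by simp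
    qed
  qed
  have neG: "?V \<noteq> {}" using x0 unfolding sum_verts_def by blast
  have "1 \<le> degree VH EH x0" using deg_pos[OF a(1,2) x0] .
  then obtain y0 where ey: "EH x0 y0" using edge_of_deg[of VH EH x0] by meson
  then have eG: "?E (Inl x0) (Inl y0)" by simp
  have lower: "card ?V + mindeg ?V ?E \<le> str ?V ?E" using str_lower[OF gG degG neG] .
  have hT: "\<forall>i\<in>{1..t}. int ?dT - dseq_z VT ET uT t i \<le> int ?dT"
  proof
    fix i assume i: "i \<in> {1..t}"
    show "int ?dT - dseq_z VT ET uT t i \<le> int ?dT"
    proof (cases "i = 1")
      case True then show ?thesis using z1[of VT ET uT t] by simp
    next
      case False then show ?thesis using i a(11) by auto
    qed
  qed
  obtain xsT where xT: "distinct (map fst xsT)" "fst ` set xsT = VT" "okl ET (int ?dT) 0 {} xsT"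
    "Phi xsT \<le> int ?dT - dseq_z VT ET uT t t"
    using dseq_list[OF a(7,10) _ hT] by auto
  have finZ: "finite ((\<lambda>i. dseq_z VH EH uH s i) ` {2..s})" by simp
  have Zle: "\<And>i. i \<in> {2..s} \<Longrightarrow> Z \<le> dseq_z VH EH uH s i" using a(5) finZ by simp
  have s2: "s \<ge> 2" using a(4) unfolding is_dseq_def by simp
  have hH: "\<forall>i\<in>{1..s}. int ?dH - dseq_z VH EH uH s i \<le> int ?dH - Z"
  proof
    fix i assume i: "i \<in> {1..s}"
    show "int ?dH - dseq_z VH EH uH s i \<le> int ?dH - Z"
    proof (cases "i = 1")
      case True then show ?thesis using a(6) z1[of VH EH uH s] by simp
    next
      case False then show ?thesis using i Zle[of i] by auto
    qed
  qed
  obtain xsH where xH: "distinct (map fst xsH)" "fst ` set xsH = VH" "okl EH (int ?dH - Z) 0 {} xsH"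
    "Phi xsH \<le> int ?dH - dseq_z VH EH uH s s"
    using dseq_list[OF a(1,4) _ hH] a(6) by auto
  have Zs: "Z \<le> dseq_z VH EH uH s s" using Zle s2 by simp
  define XT where "XT = map (\<lambda>(x,b). (Inr x :: 'a + 'b, b)) xsT"
  define XH where "XH = map (\<lambda>(x,b). (Inl x :: 'a + 'b, b)) xsH"
  have nbR: "\<forall>x w. ?E (Inr x) w \<longrightarrow> (\<exists>w0. w = Inr w0 \<and> ET x w0)"
    by (intro allI impI, erule sum_edges.elims) auto
  have nbL: "\<forall>x w. ?E (Inl x) w \<longrightarrow> (\<exists>w0. w = Inl w0 \<and> EH x w0)"
    by (intro allI impI, erule sum_edges.elims) auto
  have okT: "okl ?E (int ?dT) 0 {} XT"
    unfolding XT_def by (rule okl_map[OF nbR xT(3)]) auto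
  have okH: "okl ?E (int ?dT) (Phi XT) (sm XT) XH"
    unfolding XH_def
    by (rule okl_map[OF nbL xH(3)]) (use xT(4) a(12) in \<open>auto simp: XT_def\<close>)
  have ok: "okl ?E (int ?dT) 0 {} (XT @ XH)" using okT okH by (simp add: okl_append)
  have dist: "distinct (map fst (XT @ XH))"
    using xT(1) xH(1) unfolding XT_def XH_def
    by (auto simp: distinct_map inj_on_def case_prod_beta comp_def)
  have st: "fst ` set (XT @ XH) = ?V"
  proof -
    have "fst ` set XT = Inr ` VT" using xT(2) unfolding XT_def by (force simp: image_image case_prod_beta)
    moreover have "fst ` set XH = Inl ` VH" using xH(2) unfolding XH_def by (force simp: image_image case_prod_beta)
    ultimately show ?thesis unfolding sum_verts_def by auto
  qed
  have ph: "Phi (XT @ XH) \<le> int ?dT + 1"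
    using xT(4) xH(4) Zs a(12) unfolding XT_def XH_def by simp
  have upper: "str ?V ?E \<le> card ?V + ?dT" using str_upper[OF gG dist st ok ph eG] .
  show ?thesis using lower upper by simp
qed

end
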